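(* Let $\mathbb{G}$ be a linear array (finite set of integers with $\min\mathbb{G}=0$) whose difference coarray $\mathbb{D}$ is hole-free, and let $M=|\mathbb{U}|=|\mathbb{D}|$. For every $r\ge 1$, the difference coarray $\mathbb{D}_r$ of the fractal array $\mathbb{F}_r$ generated by $\mathbb{G}$ is hole-free, and $$\mathbb{D}_r=\left[-\tfrac{M^r-1}{2},\tfrac{M^r-1}{2}\right]\cap\mathbb{Z}.$$
   Context: A linear array is a finite set $\mathbb{G}\subset\mathbb{Z}$ of sensor positions, normalized so that $\min\mathbb{G}=0$. Its difference coarray is $\mathbb{D}=\{n_1-n_2: n_1,n_2\in\mathbb{G}\}$. For $m\ge 0$ let $\mathbb{U}_m=\{-m,\dots,-1,0,1,\dots,m\}$; the central ULA $\mathbb{U}$ of $\mathbb{D}$ is the largest $\mathbb{U}_m$ contained in $\mathbb{D}$ (so $|\mathbb{U}|$ is odd). $\mathbb{D}$ is hole-free if $\mathbb{D}=\mathbb{U}$. For sets $A,B\subset\mathbb{Z}$, $A+B=\{a+b:a\in A,b\in B\}$ and $A+t=\{a+t:a\in A\}$. With $M=|\mathbb{U}|$, the fractal array generated by $\mathbb{G}$ is defined by $\mathbb{F}_0=\{0\}$ and $\mathbb{F}_{r+1}=\bigcup_{n\in\mathbb{G}}(\mathbb{F}_r+nM^r)$ for $r\ge 0$ (so $\mathbb{F}_1=\mathbb{G}$). *)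

theory Defs
  imports Main
begin

definition coarray :: "int set \<Rightarrow> int set" where
  "coarray G = {n1 - n2 | n1 n2. n1 \<in> G \<and> n2 \<in> G}"

definition ULA :: "nat \<Rightarrow> int set" where
  "ULA m = {- int m .. int m}"

definition central_ULA :: "int set \<Rightarrow> int set" where
  "central_ULA D = ULA (GREATEST m. ULA m \<subseteq> D)"

definition hole_free :: "int set \<Rightarrow> bool" where
  "hole_free D \<longleftrightarrow> D = central_ULA D"

definition linear_array :: "int set \<Rightarrow> bool" where
  "linear_array G \<longleftrightarrow> finite G \<and> G \<noteq> {} \<and> Min G = 0"

fun fractal :: "int set \<Rightarrow> nat \<Rightarrow> nat \<Rightarrow> int set" where
  "fractal G M 0 = {0}"
| "fractal G M (Suc r) = (\<Union>n\<in>G. (\<lambda>x. x + n * int M ^ r) ` fractal G M r)"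

end

theory Submission
  imports Defs
begin

lemma sumset:
  fixes k m :: int assumes k: "k\<ge>0" and m: "m\<ge>0"
  shows "{a + (2*k+1)*b | a b. a \<in> {-k..k} \<and> b \<in> {-m..m}} = {-((2*k+1)*m+k) .. (2*k+1)*m+k}"
proof
  show "{a + (2*k+1)*b | a b. a \<in> {-k..k} \<and> b \<in> {-m..m}} \<subseteq> {-((2*k+1)*m+k) .. (2*k+1)*m+k}"
  proof
    fix x assume "x \<in> {a + (2*k+1)*b | a b. a \<in> {-k..k} \<and> b \<in> {-m..m}}"
    then obtain a b where x: "x = a + (2*k+1)*b" and a: "a \<in> {-k..k}" and b: "b \<in> {-m..m}" by blast
    have "(2*k+1)*b \<le> (2*k+1)*m" using b k by (intro mult_left_mono) auto
    moreover have "(2*k+1)*(-m) \<le> (2*k+1)*b" using b k by (intro mult_left_mono) auto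
    moreover have "-k \<le> a" "a \<le> k" using a by auto
    ultimately have "x \<le> (2*k+1)*m+k" "-((2*k+1)*m+k) \<le> x" using x by (simp_all add: algebra_simps)
    thus "x \<in> {-((2*k+1)*m+k) .. (2*k+1)*m+k}" by simp
  qed
next
  show "{-((2*k+1)*m+k) .. (2*k+1)*m+k} \<subseteq> {a + (2*k+1)*b | a b. a \<in> {-k..k} \<and> b \<in> {-m..m}}"
  proof
    fix x assume x: "x \<in> {-((2*k+1)*m+k) .. (2*k+1)*m+k}"
    define K where "K = 2*k+1"
    have K: "K > 0" using k K_def by simp
    define b where "b = (x+k) div K"
    define a where "a = (x+k) mod K - k"
    have eq: "x = a + K*b" using div_mult_mod_eq[of "x+k" K] unfolding a_def b_def by (simp add: algebra_simps)
    have a1: "0 \<le> (x+k) mod K" "(x+k) mod K < K" using K by auto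
    have "a \<in> {-k..k}" using a1 unfolding a_def K_def by auto
    moreover have "b \<ge> -m"
    proof -
      have "K*(-m) \<le> x+k" using x K_def k by (auto simp: algebra_simps)
      hence "(K*(-m)) div K \<le> (x+k) div K" by (rule zdiv_mono1) (use K in auto)
      moreover have "K \<noteq> 0" using K by simp
      hence "(K*(-m)) div K = -m" by (rule nonzero_mult_div_cancel_left)
      ultimately show ?thesis using b_def by simp
    qed
    moreover have "b \<le> m"
    proof (rule ccontr)
      assume "\<not> b \<le> m" hence "b \<ge> m+1" by simp
      hence "K*b \<ge> K*(m+1)" using K by (intro mult_left_mono) auto
      moreover have "x \<le> K*m+k" using x K_def by simp
      moreover have "-k \<le> a" using a1 unfolding a_def by simp
      moreover have "K*(m+1) = K*m + K" by (simp add: algebra_simps)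
      ultimately show False using eq K_def by linarith
    qed
    ultimately show "x \<in> {a + (2*k+1)*b | a b. a \<in> {-k..k} \<and> b \<in> {-m..m}}"
      unfolding K_def[symmetric] using eq by auto
  qed
qed

lemma coarray_step:
  "coarray (fractal G M (Suc r)) = {a + int M ^ r * b | a b. a \<in> coarray (fractal G M r) \<and> b \<in> coarray G}"
proof (rule set_eqI, rule iffI)
  fix z assume "z \<in> coarray (fractal G M (Suc r))"
  then obtain p q where z: "z = p - q" and p: "p \<in> fractal G M (Suc r)" and q: "q \<in> fractal G M (Suc r)"
    unfolding coarray_def by blast
  from p obtain n1 x where n1: "n1 \<in> G" "x \<in> fractal G M r" "p = x + n1 * int M ^ r" unfolding fractal.simps by blast
  from q obtain n2 y where n2: "n2 \<in> G" "y \<in> fractal G M r" "q = y + n2 * int M ^ r" unfolding fractal.simps by blast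
  have "z = (x - y) + int M ^ r * (n1 - n2)" using z n1 n2 by (simp add: algebra_simps)
  moreover have "x - y \<in> coarray (fractal G M r)" "n1 - n2 \<in> coarray G"
    unfolding coarray_def using n1 n2 by blast+
  ultimately show "z \<in> {a + int M ^ r * b | a b. a \<in> coarray (fractal G M r) \<and> b \<in> coarray G}" by blast
next
  fix z assume "z \<in> {a + int M ^ r * b | a b. a \<in> coarray (fractal G M r) \<and> b \<in> coarray G}"
  then obtain a b where z: "z = a + int M ^ r * b" and a: "a \<in> coarray (fractal G M r)" and b: "b \<in> coarray G" by blast
  from a obtain x y where xy: "a = x - y" "x \<in> fractal G M r" "y \<in> fractal G M r" unfolding coarray_def by blast
  from b obtain n1 n2 where nn: "b = n1 - n2" "n1 \<in> G" "n2 \<in> G" unfolding coarray_def by blast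
  have p: "x + n1 * int M ^ r \<in> fractal G M (Suc r)" using xy nn unfolding fractal.simps by blast
  have q: "y + n2 * int M ^ r \<in> fractal G M (Suc r)" using xy nn unfolding fractal.simps by blast
  have "z = (x + n1 * int M ^ r) - (y + n2 * int M ^ r)" using z xy nn by (simp add: algebra_simps)
  thus "z \<in> coarray (fractal G M (Suc r))" unfolding coarray_def using p q by blast
qed

lemma main_induct:
  fixes m :: nat
  assumes D: "coarray G = {- int m .. int m}" and M: "M = 2*m+1"
  shows "coarray (fractal G M r) = {- ((int M ^ r - 1) div 2) .. (int M ^ r - 1) div 2}
         \<and> int M ^ r = 2 * ((int M ^ r - 1) div 2) + 1"
proof (induction r)
  case 0
  show ?case by (auto simp: coarray_def)
next
  case (Suc r)
  define k where "k = (int M ^ r - 1) div 2"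
  have IH: "coarray (fractal G M r) = {-k..k}" "int M ^ r = 2*k+1" using Suc k_def by auto
  have k0: "k \<ge> 0" using IH(2) by (smt (verit) one_le_power of_nat_0_le_iff zero_le_power)
  have P: "int M ^ Suc r = 2 * ((2*k+1)*int m + k) + 1" using IH(2) M by (simp add: algebra_simps)
  have "coarray (fractal G M (Suc r)) = {a + (2*k+1)*b | a b. a \<in> {-k..k} \<and> b \<in> {-int m..int m}}"
    unfolding coarray_step IH(1) D IH(2) by simp
  also have "\<dots> = {-((2*k+1)*int m+k) .. (2*k+1)*int m+k}" by (rule sumset) (use k0 in auto)
  finally show ?case using P by simp
qed

lemma central_sym:
  fixes k :: int assumes "k \<ge> 0"
  shows "central_ULA {-k..k} = {-k..k}"
proof -
  have "(GREATEST m. ULA m \<subseteq> {-k..k}) = nat k"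
  proof (rule Greatest_equality)
    show "ULA (nat k) \<subseteq> {-k..k}" using assms by (auto simp: ULA_def)
  next
    fix y assume "ULA y \<subseteq> {-k..k}"
    hence "int y \<in> {-k..k}" by (auto simp: ULA_def)
    thus "y \<le> nat k" by auto
  qed
  thus ?thesis using assms by (simp add: central_ULA_def ULA_def)
qed

theorem theorem1:
  fixes G :: "int set" and r :: nat
  assumes "linear_array G"
    and "hole_free (coarray G)"
    and "r \<ge> 1"
  defines "M \<equiv> card (central_ULA (coarray G))"
  shows "hole_free (coarray (fractal G M r))
     \<and> coarray (fractal G M r) = {- ((int M ^ r - 1) div 2) .. (int M ^ r - 1) div 2}"
proof -
  define m where "m = (GREATEST m. ULA m \<subseteq> coarray G)"
  have D: "coarray G = {- int m .. int m}" using assms(2) unfolding hole_free_def central_ULA_def m_def ULA_def by simp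
  have "central_ULA (coarray G) = {- int m .. int m}" using assms(2) D unfolding hole_free_def by simp
  hence Mm: "M = 2*m+1" unfolding M_def by simp
  have R: "coarray (fractal G M r) = {- ((int M ^ r - 1) div 2) .. (int M ^ r - 1) div 2}"
    and O: "int M ^ r = 2 * ((int M ^ r - 1) div 2) + 1"
    using main_induct[OF D Mm] by auto
  have "(int M ^ r - 1) div 2 \<ge> 0" using O by (smt (verit) Mm of_nat_0_le_iff zero_le_power)
  thus ?thesis using R central_sym unfolding hole_free_def by simp
qed

end
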